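(* (a) The cell $S_{s_1,s_1}$ is the disjoint union of exactly two $G$-orbits of points $(P,Ps_1,Ps_1n)$: $n=n(1,0,0)$, dimension $5$, stabilizer $\left\{\begin{pmatrix}a&0&y\\0&a&z\\0&0&1/a^2\end{pmatrix}:a\in\mathbb{R}^\times,y,z\in\mathbb{R}\right\}$; $n=n(0,0,0)$, dimension $4$, stabilizer $\left\{\begin{pmatrix}a&0&y\\0&b&z\\0&0&1/(ab)\end{pmatrix}:a,b\in\mathbb{R}^\times,y,z\in\mathbb{R}\right\}$. (b) The cell $S_{s_1,s_2}$ is a single $G$-orbit, that of $(P,Ps_1,Ps_2)$, of dimension $5$ with stabilizer $\left\{\begin{pmatrix}a&0&y\\0&b&0\\0&0&1/(ab)\end{pmatrix}:a,b\in\mathbb{R}^\times,y\in\mathbb{R}\right\}$. (c) The cell $S_{s_1,1}$ is a single $G$-orbit, that of $(P,Ps_1,P)$, of dimension $4$ with stabilizer $\left\{\begin{pmatrix}a&0&y\\0&b&z\\0&0&1/(ab)\end{pmatrix}:a,b\in\mathbb{R}^\times,y,z\in\mathbb{R}\right\}$. (d) The cell $S_{s_2,s_2}$ is the disjoint union of exactly two $G$-orbits of points $(P,Ps_2,Ps_2n)$: $n=n(0,0,1)$, dimension $5$, stabilizer $\left\{\begin{pmatrix}1/a^2&x&y\\0&a&0\\0&0&a\end{pmatrix}:a\in\mathbb{R}^\times,x,y\in\mathbb{R}\right\}$; $n=n(0,0,0)$, dimension $4$, stabilizer $\left\{\begin{pmatrix}a&x&y\\0&b&0\\0&0&1/(ab)\end{pmatrix}:a,b\in\mathbb{R}^\times,x,y\in\mathbb{R}\right\}$.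 (e) The cell $S_{s_2,1}$ is a single $G$-orbit, that of $(P,Ps_2,P)$, of dimension $4$ with stabilizer $\left\{\begin{pmatrix}a&x&y\\0&b&0\\0&0&1/(ab)\end{pmatrix}:a,b\in\mathbb{R}^\times,x,y\in\mathbb{R}\right\}$. (f) The cell $S_{1,1}$ is a single $G$-orbit of dimension $3$ with stabilizer $P$.
   Context: $G=\mathrm{SL}_3(\mathbb{R})$, $P$ the upper triangular matrices in $G$; $G$ acts on $X=(P\backslash G)^3$ by right multiplication in each coordinate. $n(x,y,z)=\begin{pmatrix}1&x&y\\0&1&z\\0&0&1\end{pmatrix}$. $1$ is the identity matrix, $s_1=\begin{pmatrix}0&1&0\\1&0&0\\0&0&-1\end{pmatrix}$, $s_2=\begin{pmatrix}-1&0&0\\0&0&1\\0&1&0\end{pmatrix}$. $S_{v,w}=\big(\{P\}\times P\backslash PvP\times P\backslash PwP\big)\cdot G$. The stabilizer of $(P,Pv,Pwn)$ is $P\cap v^{-1}Pv\cap (wn)^{-1}P(wn)$. *)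

theory Defs
  imports "HOL-Analysis.Analysis"
begin

type_synonym mat3 = "real^3^3"

text \<open>Rows/columns are indexed by the literals 1, 2, 3 of the numeral type 3.\<close>
definition mk3 :: "real \<Rightarrow> real \<Rightarrow> real \<Rightarrow> real \<Rightarrow> real \<Rightarrow> real \<Rightarrow> real \<Rightarrow> real \<Rightarrow> real \<Rightarrow> mat3" where
  "mk3 a11 a12 a13 a21 a22 a23 a31 a32 a33 =
     (\<chi> i j. if i = 1 then (if j = 1 then a11 else if j = 2 then a12 else a13)
             else if i = 2 then (if j = 1 then a21 else if j = 2 then a22 else a23)
             else (if j = 1 then a31 else if j = 2 then a32 else a33))"

definition SL3 :: "mat3 set" where
  "SL3 = {A. det A = 1}"

definition Pgrp :: "mat3 set" where
  "Pgrp = {A \<in> SL3. A $ 2 $ 1 = 0 \<and> A $ 3 $ 1 = 0 \<and> A $ 3 $ 2 = 0}"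

definition nmat :: "real \<Rightarrow> real \<Rightarrow> real \<Rightarrow> mat3" where
  "nmat x y z = mk3 1 x y 0 1 z 0 0 1"

definition s1 :: mat3 where "s1 = mk3 0 1 0 1 0 0 0 0 (-1)"
definition s2 :: mat3 where "s2 = mk3 (-1) 0 0 0 0 1 0 1 0"

definition Pcoset :: "mat3 \<Rightarrow> mat3 set" where
  "Pcoset g = {p ** g | p. p \<in> Pgrp}"

type_synonym point = "mat3 set \<times> mat3 set \<times> mat3 set"

text \<open>Right action of G on X = (P\G)^3.\<close>
definition act :: "point \<Rightarrow> mat3 \<Rightarrow> point" where
  "act x g = (case x of (C1, C2, C3) \<Rightarrow>
      ((\<lambda>c. c ** g) ` C1, (\<lambda>c. c ** g) ` C2, (\<lambda>c. c ** g) ` C3))"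

definition orbit :: "point \<Rightarrow> point set" where
  "orbit x = {act x g | g. g \<in> SL3}"

definition stab :: "point \<Rightarrow> mat3 set" where
  "stab x = {g \<in> SL3. act x g = x}"

definition pt :: "mat3 \<Rightarrow> mat3 \<Rightarrow> point" where
  "pt v w = (Pcoset (mat 1), Pcoset v, Pcoset w)"

text \<open>The cell S_{v,w} = ({P} x P\PvP x P\PwP) . G.\<close>
definition dcoset :: "mat3 \<Rightarrow> mat3 set" where
  "dcoset v = {p ** v ** q | p q. p \<in> Pgrp \<and> q \<in> Pgrp}"

definition cell :: "mat3 \<Rightarrow> mat3 \<Rightarrow> point set" where
  "cell v w = {act (Pcoset (mat 1), Pcoset x, Pcoset y) g | g x y.
                 g \<in> SL3 \<and> x \<in> dcoset v \<and> y \<in> dcoset w}"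

text \<open>Dimension of a (closed) matrix group: dimension of its tangent space at the identity
  (= its Lie algebra), i.e. the span of velocities of differentiable curves through 1 in H.\<close>
definition lie_dim :: "mat3 set \<Rightarrow> nat" where
  "lie_dim H = dim {v. \<exists>c :: real \<Rightarrow> mat3. c 0 = mat 1 \<and> (\<forall>t. c t \<in> H) \<and>
                          (c has_vector_derivative v) (at 0)}"

definition orbit_dim :: "point \<Rightarrow> nat" where
  "orbit_dim x = lie_dim SL3 - lie_dim (stab x)"

end

theory Submission
  imports Defs
begin


lemma three_neq[simp]: "(1::3) \<noteq> 2" "(2::3) \<noteq> 1" "(1::3) \<noteq> 3" "(3::3) \<noteq> 1" "(2::3) \<noteq> 3" "(3::3) \<noteq> 2"
  by simp_all

lemma mk3_nth[simp]:
  "mk3 a11 a12 a13 a21 a22 a23 a31 a32 a33 $ 1 $ 1 = a11"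
  "mk3 a11 a12 a13 a21 a22 a23 a31 a32 a33 $ 1 $ 2 = a12"
  "mk3 a11 a12 a13 a21 a22 a23 a31 a32 a33 $ 1 $ 3 = a13"
  "mk3 a11 a12 a13 a21 a22 a23 a31 a32 a33 $ 2 $ 1 = a21"
  "mk3 a11 a12 a13 a21 a22 a23 a31 a32 a33 $ 2 $ 2 = a22"
  "mk3 a11 a12 a13 a21 a22 a23 a31 a32 a33 $ 2 $ 3 = a23"
  "mk3 a11 a12 a13 a21 a22 a23 a31 a32 a33 $ 3 $ 1 = a31"
  "mk3 a11 a12 a13 a21 a22 a23 a31 a32 a33 $ 3 $ 2 = a32"
  "mk3 a11 a12 a13 a21 a22 a23 a31 a32 a33 $ 3 $ 3 = a33"
  by (simp_all add: mk3_def)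

lemma mk3_eta: "A = mk3 (A$1$1) (A$1$2) (A$1$3) (A$2$1) (A$2$2) (A$2$3) (A$3$1) (A$3$2) (A$3$3)"
  by (simp add: vec_eq_iff forall_3)

lemma mk3_eq_iff: "mk3 a11 a12 a13 a21 a22 a23 a31 a32 a33 = mk3 b11 b12 b13 b21 b22 b23 b31 b32 b33
  \<longleftrightarrow> a11 = b11 \<and> a12 = b12 \<and> a13 = b13 \<and> a21 = b21 \<and> a22 = b22 \<and> a23 = b23 \<and> a31 = b31 \<and> a32 = b32 \<and> a33 = b33"
  by (simp add: vec_eq_iff forall_3)

lemma mk3_mult: "mk3 a11 a12 a13 a21 a22 a23 a31 a32 a33 ** mk3 b11 b12 b13 b21 b22 b23 b31 b32 b33 =
  mk3 (a11*b11+a12*b21+a13*b31) (a11*b12+a12*b22+a13*b32) (a11*b13+a12*b23+a13*b33)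
      (a21*b11+a22*b21+a23*b31) (a21*b12+a22*b22+a23*b32) (a21*b13+a22*b23+a23*b33)
      (a31*b11+a32*b21+a33*b31) (a31*b12+a32*b22+a33*b32) (a31*b13+a32*b23+a33*b33)"
  by (simp add: vec_eq_iff forall_3 matrix_matrix_mult_def sum_3)

lemma det_mk3: "det (mk3 a11 a12 a13 a21 a22 a23 a31 a32 a33) =
    a11 * a22 * a33 + a12 * a23 * a31 + a13 * a21 * a32 - a11 * a23 * a32 - a12 * a21 * a33 - a13 * a22 * a31"
  by (simp add: det_3)

lemma mat1_mk3: "mat 1 = mk3 1 0 0 0 1 0 0 0 1"
  by (simp add: vec_eq_iff forall_3 mat_def)

lemma mk3_P: "mk3 a11 a12 a13 a21 a22 a23 a31 a32 a33 \<in> Pgrp \<longleftrightarrow>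
   a11 * a22 * a33 + a12 * a23 * a31 + a13 * a21 * a32 - a11 * a23 * a32 - a12 * a21 * a33 - a13 * a22 * a31 = 1
   \<and> a21 = 0 \<and> a31 = 0 \<and> a32 = 0"
  by (auto simp: Pgrp_def SL3_def det_mk3)

lemma P_form: "p \<in> Pgrp \<longleftrightarrow> (\<exists>a x y b z c. p = mk3 a x y 0 b z 0 0 c \<and> a*b*c = 1)"
proof
  assume h: "p \<in> Pgrp"
  have e: "p = mk3 (p$1$1) (p$1$2) (p$1$3) (p$2$1) (p$2$2) (p$2$3) (p$3$1) (p$3$2) (p$3$3)" by (rule mk3_eta)
  have z: "p$2$1 = 0" "p$3$1 = 0" "p$3$2 = 0" "det p = 1" using h by (auto simp: Pgrp_def SL3_def)
  then have "p$1$1 * p$2$2 * p$3$3 = 1" by (simp add: det_3)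
  then show "\<exists>a x y b z c. p = mk3 a x y 0 b z 0 0 c \<and> a*b*c = 1"
    using e z by metis
next
  assume "\<exists>a x y b z c. p = mk3 a x y 0 b z 0 0 c \<and> a*b*c = 1"
  then show "p \<in> Pgrp" by (auto simp: mk3_P)
qed

lemma P_one: "mat 1 \<in> Pgrp" by (simp add: mat1_mk3 mk3_P)

lemma P_mult: "p \<in> Pgrp \<Longrightarrow> q \<in> Pgrp \<Longrightarrow> p ** q \<in> Pgrp"
proof -
  assume a: "p \<in> Pgrp" "q \<in> Pgrp"
  then have "det (p ** q) = 1" by (simp add: Pgrp_def SL3_def det_mul)
  moreover have "(p ** q)$2$1 = 0 \<and> (p ** q)$3$1 = 0 \<and> (p ** q)$3$2 = 0"
    using a by (simp add: Pgrp_def matrix_matrix_mult_def sum_3)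
  ultimately show ?thesis by (simp add: Pgrp_def SL3_def)
qed

lemma P_inv: "p \<in> Pgrp \<Longrightarrow> \<exists>q\<in>Pgrp. q ** p = mat 1 \<and> p ** q = mat 1"
proof -
  assume "p \<in> Pgrp"
  then obtain a x y b z c where p: "p = mk3 a x y 0 b z 0 0 c" and d: "a*b*c = 1" by (auto simp: P_form)
  then have nz: "a \<noteq> 0" "b \<noteq> 0" by auto
  have c: "c = 1/(a*b)" using d nz by (simp add: field_simps)
  show ?thesis
    by (rule bexI[of _ "mk3 (1/a) (-x/(a*b)) (x*z - b*y) 0 (1/b) (-a*z) 0 0 (a*b)"])
     (use nz in \<open>auto simp: p c mk3_mult mat1_mk3 mk3_P field_simps\<close>)
qed

lemma SL3_mult: "g \<in> SL3 \<Longrightarrow> h \<in> SL3 \<Longrightarrow> g ** h \<in> SL3"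
  by (simp add: SL3_def det_mul)

lemma P_SL3: "p \<in> Pgrp \<Longrightarrow> p \<in> SL3" by (simp add: Pgrp_def)

lemma Pcoset_eq: "Pcoset a = Pcoset b \<longleftrightarrow> (\<exists>p\<in>Pgrp. a = p ** b)"
proof
  assume "Pcoset a = Pcoset b"
  moreover have "a \<in> Pcoset a" unfolding Pcoset_def using P_one matrix_mul_lid[of a] by force
  ultimately show "\<exists>p\<in>Pgrp. a = p ** b" by (auto simp: Pcoset_def)
next
  assume "\<exists>p\<in>Pgrp. a = p ** b"
  then obtain p where p: "p \<in> Pgrp" "a = p ** b" by blast
  obtain q where q: "q \<in> Pgrp" "q ** p = mat 1" "p ** q = mat 1" using P_inv[OF p(1)] by blast
  show "Pcoset a = Pcoset b"
  proof (auto simp: Pcoset_def)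
    fix r assume r: "r \<in> Pgrp"
    have "r ** a = (r ** p) ** b" using p(2) by (simp add: matrix_mul_assoc)
    then show "\<exists>r'. r ** a = r' ** b \<and> r' \<in> Pgrp"
      using r p(1) P_mult by blast
  next
    fix r assume r: "r \<in> Pgrp"
    have "(r ** q) ** a = r ** ((q ** p) ** b)" using p(2) by (simp add: matrix_mul_assoc)
    also have "\<dots> = r ** b" using q(2) by (simp add: matrix_mul_lid)
    finally show "\<exists>r'. r ** b = r' ** a \<and> r' \<in> Pgrp" using r q(1) P_mult by metis
  qed
qed

lemma Pcoset_img: "(\<lambda>c. c ** g) ` Pcoset a = Pcoset (a ** g)"
  by (auto simp: Pcoset_def matrix_mul_assoc image_iff)

lemma act_pt: "act (Pcoset (mat 1), Pcoset v, Pcoset w) g = (Pcoset g, Pcoset (v ** g), Pcoset (w ** g))"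
  by (simp add: act_def Pcoset_img)

lemma Pcoset_one: "Pcoset g = Pcoset (mat 1) \<longleftrightarrow> g \<in> Pgrp"
  by (simp add: Pcoset_eq)

lemma conj_cond:
  assumes "v ** vi = mat 1" "vi ** v = mat 1"
  shows "(\<exists>p\<in>Pgrp. a = p ** v) \<longleftrightarrow> a ** vi \<in> Pgrp"
proof
  assume "\<exists>p\<in>Pgrp. a = p ** v"
  then obtain p where "p \<in> Pgrp" "a = p ** v" by blast
  then have "a ** vi = p" using assms(1) by (simp add: matrix_mul_assoc[symmetric])
  then show "a ** vi \<in> Pgrp" using \<open>p \<in> Pgrp\<close> by simp
next
  assume "a ** vi \<in> Pgrp"
  moreover have "a = (a ** vi) ** v" using assms(2) by (simp add: matrix_mul_assoc[symmetric])
  ultimately show "\<exists>p\<in>Pgrp. a = p ** v" by blast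
qed

lemma stab_pt: "stab (pt v w) = {g \<in> SL3. g \<in> Pgrp \<and> (\<exists>p\<in>Pgrp. v ** g = p ** v) \<and> (\<exists>p\<in>Pgrp. w ** g = p ** w)}"
  unfolding stab_def pt_def act_pt by (simp add: Pcoset_eq)

lemma orbit_pt: "orbit (pt v w) = {(Pcoset g, Pcoset (v ** g), Pcoset (w ** g)) | g. g \<in> SL3}"
  unfolding orbit_def pt_def act_pt by simp



definition Vel :: "mat3 set \<Rightarrow> mat3 set" where
  "Vel H = {v. \<exists>c :: real \<Rightarrow> mat3. c 0 = mat 1 \<and> (\<forall>t. c t \<in> H) \<and> (c has_vector_derivative v) (at 0)}"

lemma lie_dim_Vel: "lie_dim H = dim (Vel H)"
  by (simp add: lie_dim_def Vel_def)

lemma comp_deriv: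
  fixes c :: "real \<Rightarrow> mat3" and i j :: 3
  assumes "(c has_vector_derivative v) (at 0)"
  shows "((\<lambda>t. c t $ i $ j) has_real_derivative v $ i $ j) (at 0)"
proof -
  have bl: "bounded_linear (\<lambda>A::mat3. A $ i $ j)"
    using bounded_linear_compose[OF bounded_linear_vec_nth[of j] bounded_linear_vec_nth[of i]] by (simp add: o_def)
  show ?thesis
    using bounded_linear.has_vector_derivative[OF bl assms]
    by (simp add: has_real_derivative_iff_has_vector_derivative)
qed

lemma vel_zero:
  fixes c :: "real \<Rightarrow> mat3" and i j :: 3
  assumes "(c has_vector_derivative v) (at 0)" "\<forall>t. c t $ i $ j = 0"
  shows "v $ i $ j = 0"
proof -
  have "(\<lambda>t. c t $ i $ j) = (\<lambda>t. 0)" using assms(2) by auto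
  then have "((\<lambda>t::real. 0::real) has_real_derivative v $ i $ j) (at 0)" using comp_deriv[OF assms(1), of i j] by simp
  then show ?thesis using DERIV_const DERIV_unique by blast
qed

lemma vel_eq:
  fixes c :: "real \<Rightarrow> mat3" and i j k l :: 3
  assumes "(c has_vector_derivative v) (at 0)" "\<forall>t. c t $ i $ j = c t $ k $ l"
  shows "v $ i $ j = v $ k $ l"
proof -
  have "(\<lambda>t. c t $ i $ j) = (\<lambda>t. c t $ k $ l)" using assms(2) by auto
  then have "((\<lambda>t. c t $ k $ l) has_real_derivative v $ i $ j) (at 0)" using comp_deriv[OF assms(1), of i j] by simp
  then show ?thesis using comp_deriv[OF assms(1), of k l] DERIV_unique by blast
qed

lemma vel_trace:
  fixes c :: "real \<Rightarrow> mat3"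
  assumes d: "(c has_vector_derivative v) (at 0)" and c0: "c 0 = mat 1" and sl: "\<forall>t. c t \<in> SL3"
  shows "v$1$1 + v$2$2 + v$3$3 = 0"
proof -
  have D: "((\<lambda>t. c t$1$1 * c t$2$2 * c t$3$3 + c t$1$2 * c t$2$3 * c t$3$1 + c t$1$3 * c t$2$1 * c t$3$2
       - c t$1$1 * c t$2$3 * c t$3$2 - c t$1$2 * c t$2$1 * c t$3$3 - c t$1$3 * c t$2$2 * c t$3$1)
     has_real_derivative (v$1$1 + v$2$2 + v$3$3)) (at 0)"
    by (auto intro!: derivative_eq_intros comp_deriv[OF d] simp: c0 mat1_mk3)
  have "(\<lambda>t. c t$1$1 * c t$2$2 * c t$3$3 + c t$1$2 * c t$2$3 * c t$3$1 + c t$1$3 * c t$2$1 * c t$3$2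
       - c t$1$1 * c t$2$3 * c t$3$2 - c t$1$2 * c t$2$1 * c t$3$3 - c t$1$3 * c t$2$2 * c t$3$1) = (\<lambda>t. 1)"
    using sl by (auto simp: SL3_def det_3)
  then show ?thesis using D DERIV_const DERIV_unique by metis
qed

lemma mk3_decomp: "mk3 a11 a12 a13 a21 a22 a23 a31 a32 a33 =
   a11 *\<^sub>R mk3 1 0 0 0 0 0 0 0 0 + a12 *\<^sub>R mk3 0 1 0 0 0 0 0 0 0 + a13 *\<^sub>R mk3 0 0 1 0 0 0 0 0 0 +
   a21 *\<^sub>R mk3 0 0 0 1 0 0 0 0 0 + a22 *\<^sub>R mk3 0 0 0 0 1 0 0 0 0 + a23 *\<^sub>R mk3 0 0 0 0 0 1 0 0 0 +
   a31 *\<^sub>R mk3 0 0 0 0 0 0 1 0 0 + a32 *\<^sub>R mk3 0 0 0 0 0 0 0 1 0 + a33 *\<^sub>R mk3 0 0 0 0 0 0 0 0 1"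
  by (simp add: vec_eq_iff forall_3)

lemma mk3_deriv:
  assumes "(f11 has_real_derivative d11) (at 0)" "(f12 has_real_derivative d12) (at 0)" "(f13 has_real_derivative d13) (at 0)"
    "(f21 has_real_derivative d21) (at 0)" "(f22 has_real_derivative d22) (at 0)" "(f23 has_real_derivative d23) (at 0)"
    "(f31 has_real_derivative d31) (at 0)" "(f32 has_real_derivative d32) (at 0)" "(f33 has_real_derivative d33) (at 0)"
  shows "((\<lambda>t. mk3 (f11 t) (f12 t) (f13 t) (f21 t) (f22 t) (f23 t) (f31 t) (f32 t) (f33 t)) has_vector_derivative
     mk3 d11 d12 d13 d21 d22 d23 d31 d32 d33) (at 0)"
  apply (subst mk3_decomp)
  apply (rule derivative_eq_intros has_vector_derivative_scaleR assms has_vector_derivative_const | simp)+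
  apply (rule mk3_decomp[symmetric])
  done

lemma mk3_add: "mk3 a11 a12 a13 a21 a22 a23 a31 a32 a33 + mk3 b11 b12 b13 b21 b22 b23 b31 b32 b33 =
   mk3 (a11+b11) (a12+b12) (a13+b13) (a21+b21) (a22+b22) (a23+b23) (a31+b31) (a32+b32) (a33+b33)"
  by (simp add: vec_eq_iff forall_3)

lemma mk3_scale: "r *\<^sub>R mk3 a11 a12 a13 a21 a22 a23 a31 a32 a33 =
   mk3 (r*a11) (r*a12) (r*a13) (r*a21) (r*a22) (r*a23) (r*a31) (r*a32) (r*a33)"
  by (simp add: vec_eq_iff forall_3)

lemma lie_dim_param:
  fixes L :: "'a::euclidean_space \<Rightarrow> mat3"
  assumes lin: "linear L" and inj: "inj L" and sub: "Vel H \<subseteq> range L" and bas: "L ` Basis \<subseteq> Vel H"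
  shows "lie_dim H = DIM('a)"
proof -
  have "range L = span (L ` Basis)"
    using linear_span_image[OF lin, of Basis] by (simp add: span_Basis)
  also have "\<dots> \<subseteq> span (Vel H)" using bas by (rule span_mono)
  finally have 1: "range L \<subseteq> span (Vel H)" .
  have "subspace (range L)" using lin by (simp add: linear_subspace_image)
  then have 2: "span (Vel H) \<subseteq> range L" using sub by (rule span_minimal[rotated])
  have "dim (Vel H) = dim (span (Vel H))" by simp
  also have "\<dots> = dim (range L)" using 1 2 by auto
  also have "\<dots> = dim (UNIV :: 'a set)"
    using dim_image_eq[OF lin, of UNIV] inj by (simp add: inj_on_def)
  finally show ?thesis by (simp add: lie_dim_Vel)
qed



lemma VelI: "c 0 = mat 1 \<Longrightarrow> (\<And>t. c t \<in> H) \<Longrightarrow> (c has_vector_derivative v) (at 0) \<Longrightarrow> v \<in> Vel H"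
  unfolding Vel_def by blast

lemma VelE: "v \<in> Vel H \<Longrightarrow> (\<And>c. c 0 = mat 1 \<Longrightarrow> (\<forall>t. c t \<in> H) \<Longrightarrow> (c has_vector_derivative v) (at 0) \<Longrightarrow> P) \<Longrightarrow> P"
  unfolding Vel_def by blast

definition Ha2 :: "mat3 set" where "Ha2 = {mk3 a 0 y 0 b z 0 0 (1 / (a * b)) | a b y z. a \<noteq> 0 \<and> b \<noteq> 0}"

lemma Ha2_SL3: "Ha2 \<subseteq> SL3" by (auto simp: Ha2_def SL3_def det_mk3 field_simps power2_eq_square)

lemma dim_Ha2: "lie_dim Ha2 = 4"
proof -
  define L :: "real \<times> real \<times> real \<times> real \<Rightarrow> mat3" where
    "L = (\<lambda>x. mk3 (fst x) 0 (fst (snd (snd x))) 0 (fst (snd x)) (snd (snd (snd x))) 0 0 (- (fst x) - (fst (snd x))))"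
  have lin: "linear L" by (rule linearI) (auto simp: L_def mk3_add mk3_scale algebra_simps)
  have inj: "inj L" by (rule injI) (auto simp: L_def mk3_eq_iff prod_eq_iff)
  have sub: "Vel Ha2 \<subseteq> range L"
  proof
    fix v assume "v \<in> Vel Ha2"
    then obtain c where c0: "c 0 = mat 1" and cH: "\<forall>t. c t \<in> Ha2" and d: "(c has_vector_derivative v) (at 0)"
      by (rule VelE)
    have tr: "v$1$1 + v$2$2 + v$3$3 = 0" using vel_trace[OF d c0] cH Ha2_SL3 by blast
    have "\<forall>t. c t $ 1 $ 2 = 0 \<and> c t $ 2 $ 1 = 0 \<and> c t $ 3 $ 1 = 0 \<and> c t $ 3 $ 2 = 0"
    proof
      fix t have "c t \<in> Ha2" using cH by blast
      then show "c t $ 1 $ 2 = 0 \<and> c t $ 2 $ 1 = 0 \<and> c t $ 3 $ 1 = 0 \<and> c t $ 3 $ 2 = 0"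
        by (auto simp: Ha2_def Pgrp_def)
    qed
    then have "v $ 1 $ 2 = 0" "v $ 2 $ 1 = 0" "v $ 3 $ 1 = 0" "v $ 3 $ 2 = 0"
      by (simp_all add: vel_zero[OF d] vel_eq[OF d])
    then have "v = L (v$1$1, v$2$2, v$1$3, v$2$3)"
      using tr by (subst mk3_eta) (simp add: L_def mk3_eq_iff)
    then show "v \<in> range L" by blast
  qed
  have bas: "L ` Basis \<subseteq> Vel Ha2"
  proof -
    have "mk3 1 0 0 0 0 0 0 0 (-1) \<in> Vel Ha2"
      by (rule VelI[where c="\<lambda>t. mk3 (exp t) 0 0 0 1 0 0 0 (1 / (exp t * 1))"])
        (auto simp: mat1_mk3 Ha2_def mk3_eq_iff intro!: mk3_deriv derivative_eq_intros)
    moreover have "mk3 0 0 0 0 1 0 0 0 (-1) \<in> Vel Ha2"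
      by (rule VelI[where c="\<lambda>t. mk3 1 0 0 0 (exp t) 0 0 0 (1 / (1 * exp t))"])
        (auto simp: mat1_mk3 Ha2_def mk3_eq_iff intro!: mk3_deriv derivative_eq_intros)
    moreover have "mk3 0 0 1 0 0 0 0 0 0 \<in> Vel Ha2"
      by (rule VelI[where c="\<lambda>t. mk3 1 0 t 0 1 0 0 0 (1 / (1 * 1))"])
        (auto simp: mat1_mk3 Ha2_def mk3_eq_iff intro!: mk3_deriv derivative_eq_intros)
    moreover have "mk3 0 0 0 0 0 1 0 0 0 \<in> Vel Ha2"
      by (rule VelI[where c="\<lambda>t. mk3 1 0 0 0 1 t 0 0 (1 / (1 * 1))"])
        (auto simp: mat1_mk3 Ha2_def mk3_eq_iff intro!: mk3_deriv derivative_eq_intros)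
    ultimately show ?thesis by (auto simp: Basis_prod_def L_def)
  qed
  show ?thesis using lie_dim_param[OF lin inj sub bas] by simp
qed

definition Hb :: "mat3 set" where "Hb = {mk3 a 0 y 0 b 0 0 0 (1 / (a * b)) | a b y. a \<noteq> 0 \<and> b \<noteq> 0}"

lemma Hb_SL3: "Hb \<subseteq> SL3" by (auto simp: Hb_def SL3_def det_mk3 field_simps power2_eq_square)

lemma dim_Hb: "lie_dim Hb = 3"
proof -
  define L :: "real \<times> real \<times> real \<Rightarrow> mat3" where
    "L = (\<lambda>x. mk3 (fst x) 0 (snd (snd x)) 0 (fst (snd x)) 0 0 0 (- (fst x) - (fst (snd x))))"
  have lin: "linear L" by (rule linearI) (auto simp: L_def mk3_add mk3_scale algebra_simps)
  have inj: "inj L" by (rule injI) (auto simp: L_def mk3_eq_iff prod_eq_iff)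
  have sub: "Vel Hb \<subseteq> range L"
  proof
    fix v assume "v \<in> Vel Hb"
    then obtain c where c0: "c 0 = mat 1" and cH: "\<forall>t. c t \<in> Hb" and d: "(c has_vector_derivative v) (at 0)"
      by (rule VelE)
    have tr: "v$1$1 + v$2$2 + v$3$3 = 0" using vel_trace[OF d c0] cH Hb_SL3 by blast
    have "\<forall>t. c t $ 1 $ 2 = 0 \<and> c t $ 2 $ 1 = 0 \<and> c t $ 2 $ 3 = 0 \<and> c t $ 3 $ 1 = 0 \<and> c t $ 3 $ 2 = 0"
    proof
      fix t have "c t \<in> Hb" using cH by blast
      then show "c t $ 1 $ 2 = 0 \<and> c t $ 2 $ 1 = 0 \<and> c t $ 2 $ 3 = 0 \<and> c t $ 3 $ 1 = 0 \<and> c t $ 3 $ 2 = 0"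
        by (auto simp: Hb_def Pgrp_def)
    qed
    then have "v $ 1 $ 2 = 0" "v $ 2 $ 1 = 0" "v $ 2 $ 3 = 0" "v $ 3 $ 1 = 0" "v $ 3 $ 2 = 0"
      by (simp_all add: vel_zero[OF d] vel_eq[OF d])
    then have "v = L (v$1$1, v$2$2, v$1$3)"
      using tr by (subst mk3_eta) (simp add: L_def mk3_eq_iff)
    then show "v \<in> range L" by blast
  qed
  have bas: "L ` Basis \<subseteq> Vel Hb"
  proof -
    have "mk3 1 0 0 0 0 0 0 0 (-1) \<in> Vel Hb"
      by (rule VelI[where c="\<lambda>t. mk3 (exp t) 0 0 0 1 0 0 0 (1 / (exp t * 1))"])
        (auto simp: mat1_mk3 Hb_def mk3_eq_iff intro!: mk3_deriv derivative_eq_intros)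
    moreover have "mk3 0 0 0 0 1 0 0 0 (-1) \<in> Vel Hb"
      by (rule VelI[where c="\<lambda>t. mk3 1 0 0 0 (exp t) 0 0 0 (1 / (1 * exp t))"])
        (auto simp: mat1_mk3 Hb_def mk3_eq_iff intro!: mk3_deriv derivative_eq_intros)
    moreover have "mk3 0 0 1 0 0 0 0 0 0 \<in> Vel Hb"
      by (rule VelI[where c="\<lambda>t. mk3 1 0 t 0 1 0 0 0 (1 / (1 * 1))"])
        (auto simp: mat1_mk3 Hb_def mk3_eq_iff intro!: mk3_deriv derivative_eq_intros)
    ultimately show ?thesis by (auto simp: Basis_prod_def L_def)
  qed
  show ?thesis using lie_dim_param[OF lin inj sub bas] by simp
qed

definition Hd1 :: "mat3 set" where "Hd1 = {mk3 (1 / a^2) x y 0 a 0 0 0 a | a x y. a \<noteq> 0}"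

lemma Hd1_SL3: "Hd1 \<subseteq> SL3" by (auto simp: Hd1_def SL3_def det_mk3 field_simps power2_eq_square)

lemma dim_Hd1: "lie_dim Hd1 = 3"
proof -
  define L :: "real \<times> real \<times> real \<Rightarrow> mat3" where
    "L = (\<lambda>x. mk3 (-2 * (fst x)) (fst (snd x)) (snd (snd x)) 0 (fst x) 0 0 0 (fst x))"
  have lin: "linear L" by (rule linearI) (auto simp: L_def mk3_add mk3_scale algebra_simps)
  have inj: "inj L" by (rule injI) (auto simp: L_def mk3_eq_iff prod_eq_iff)
  have sub: "Vel Hd1 \<subseteq> range L"
  proof
    fix v assume "v \<in> Vel Hd1"
    then obtain c where c0: "c 0 = mat 1" and cH: "\<forall>t. c t \<in> Hd1" and d: "(c has_vector_derivative v) (at 0)"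
      by (rule VelE)
    have tr: "v$1$1 + v$2$2 + v$3$3 = 0" using vel_trace[OF d c0] cH Hd1_SL3 by blast
    have "\<forall>t. c t $ 2 $ 1 = 0 \<and> c t $ 2 $ 3 = 0 \<and> c t $ 3 $ 1 = 0 \<and> c t $ 3 $ 2 = 0 \<and> c t $ 2 $ 2 = c t $ 3 $ 3"
    proof
      fix t have "c t \<in> Hd1" using cH by blast
      then show "c t $ 2 $ 1 = 0 \<and> c t $ 2 $ 3 = 0 \<and> c t $ 3 $ 1 = 0 \<and> c t $ 3 $ 2 = 0 \<and> c t $ 2 $ 2 = c t $ 3 $ 3"
        by (auto simp: Hd1_def Pgrp_def)
    qed
    then have "v $ 2 $ 1 = 0" "v $ 2 $ 3 = 0" "v $ 3 $ 1 = 0" "v $ 3 $ 2 = 0" "v $ 2 $ 2 = v $ 3 $ 3"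
      by (simp_all add: vel_zero[OF d] vel_eq[OF d])
    then have "v = L (v$2$2, v$1$2, v$1$3)"
      using tr by (subst mk3_eta) (simp add: L_def mk3_eq_iff)
    then show "v \<in> range L" by blast
  qed
  have bas: "L ` Basis \<subseteq> Vel Hd1"
  proof -
    have "mk3 (-2) 0 0 0 1 0 0 0 1 \<in> Vel Hd1"
      by (rule VelI[where c="\<lambda>t. mk3 (1 / (exp t)^2) 0 0 0 (exp t) 0 0 0 (exp t)"])
        (auto simp: mat1_mk3 Hd1_def mk3_eq_iff intro!: mk3_deriv derivative_eq_intros)
    moreover have "mk3 0 1 0 0 0 0 0 0 0 \<in> Vel Hd1"
      by (rule VelI[where c="\<lambda>t. mk3 (1 / 1^2) t 0 0 1 0 0 0 1"])
        (auto simp: mat1_mk3 Hd1_def mk3_eq_iff intro!: mk3_deriv derivative_eq_intros)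
    moreover have "mk3 0 0 1 0 0 0 0 0 0 \<in> Vel Hd1"
      by (rule VelI[where c="\<lambda>t. mk3 (1 / 1^2) 0 t 0 1 0 0 0 1"])
        (auto simp: mat1_mk3 Hd1_def mk3_eq_iff intro!: mk3_deriv derivative_eq_intros)
    ultimately show ?thesis by (auto simp: Basis_prod_def L_def)
  qed
  show ?thesis using lie_dim_param[OF lin inj sub bas] by simp
qed

definition Hd2 :: "mat3 set" where "Hd2 = {mk3 a x y 0 b 0 0 0 (1 / (a * b)) | a b x y. a \<noteq> 0 \<and> b \<noteq> 0}"

lemma Hd2_SL3: "Hd2 \<subseteq> SL3" by (auto simp: Hd2_def SL3_def det_mk3 field_simps power2_eq_square)

lemma dim_Hd2: "lie_dim Hd2 = 4"
proof -
  define L :: "real \<times> real \<times> real \<times> real \<Rightarrow> mat3" where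
    "L = (\<lambda>x. mk3 (fst x) (fst (snd (snd x))) (snd (snd (snd x))) 0 (fst (snd x)) 0 0 0 (- (fst x) - (fst (snd x))))"
  have lin: "linear L" by (rule linearI) (auto simp: L_def mk3_add mk3_scale algebra_simps)
  have inj: "inj L" by (rule injI) (auto simp: L_def mk3_eq_iff prod_eq_iff)
  have sub: "Vel Hd2 \<subseteq> range L"
  proof
    fix v assume "v \<in> Vel Hd2"
    then obtain c where c0: "c 0 = mat 1" and cH: "\<forall>t. c t \<in> Hd2" and d: "(c has_vector_derivative v) (at 0)"
      by (rule VelE)
    have tr: "v$1$1 + v$2$2 + v$3$3 = 0" using vel_trace[OF d c0] cH Hd2_SL3 by blast
    have "\<forall>t. c t $ 2 $ 1 = 0 \<and> c t $ 2 $ 3 = 0 \<and> c t $ 3 $ 1 = 0 \<and> c t $ 3 $ 2 = 0"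
    proof
      fix t have "c t \<in> Hd2" using cH by blast
      then show "c t $ 2 $ 1 = 0 \<and> c t $ 2 $ 3 = 0 \<and> c t $ 3 $ 1 = 0 \<and> c t $ 3 $ 2 = 0"
        by (auto simp: Hd2_def Pgrp_def)
    qed
    then have "v $ 2 $ 1 = 0" "v $ 2 $ 3 = 0" "v $ 3 $ 1 = 0" "v $ 3 $ 2 = 0"
      by (simp_all add: vel_zero[OF d] vel_eq[OF d])
    then have "v = L (v$1$1, v$2$2, v$1$2, v$1$3)"
      using tr by (subst mk3_eta) (simp add: L_def mk3_eq_iff)
    then show "v \<in> range L" by blast
  qed
  have bas: "L ` Basis \<subseteq> Vel Hd2"
  proof -
    have "mk3 1 0 0 0 0 0 0 0 (-1) \<in> Vel Hd2"
      by (rule VelI[where c="\<lambda>t. mk3 (exp t) 0 0 0 1 0 0 0 (1 / (exp t * 1))"])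
        (auto simp: mat1_mk3 Hd2_def mk3_eq_iff intro!: mk3_deriv derivative_eq_intros)
    moreover have "mk3 0 0 0 0 1 0 0 0 (-1) \<in> Vel Hd2"
      by (rule VelI[where c="\<lambda>t. mk3 1 0 0 0 (exp t) 0 0 0 (1 / (1 * exp t))"])
        (auto simp: mat1_mk3 Hd2_def mk3_eq_iff intro!: mk3_deriv derivative_eq_intros)
    moreover have "mk3 0 1 0 0 0 0 0 0 0 \<in> Vel Hd2"
      by (rule VelI[where c="\<lambda>t. mk3 1 t 0 0 1 0 0 0 (1 / (1 * 1))"])
        (auto simp: mat1_mk3 Hd2_def mk3_eq_iff intro!: mk3_deriv derivative_eq_intros)
    moreover have "mk3 0 0 1 0 0 0 0 0 0 \<in> Vel Hd2"
      by (rule VelI[where c="\<lambda>t. mk3 1 0 t 0 1 0 0 0 (1 / (1 * 1))"])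
        (auto simp: mat1_mk3 Hd2_def mk3_eq_iff intro!: mk3_deriv derivative_eq_intros)
    ultimately show ?thesis by (auto simp: Basis_prod_def L_def)
  qed
  show ?thesis using lie_dim_param[OF lin inj sub bas] by simp
qed

lemma dim_Pgrp: "lie_dim Pgrp = 5"
proof -
  define L :: "real \<times> real \<times> real \<times> real \<times> real \<Rightarrow> mat3" where
    "L = (\<lambda>x. mk3 (fst x) (fst (snd (snd x))) (fst (snd (snd (snd x)))) 0 (fst (snd x)) (snd (snd (snd (snd x)))) 0 0 (- (fst x) - (fst (snd x))))"
  have lin: "linear L" by (rule linearI) (auto simp: L_def mk3_add mk3_scale algebra_simps)
  have inj: "inj L" by (rule injI) (auto simp: L_def mk3_eq_iff prod_eq_iff)
  have sub: "Vel Pgrp \<subseteq> range L"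
  proof
    fix v assume "v \<in> Vel Pgrp"
    then obtain c where c0: "c 0 = mat 1" and cH: "\<forall>t. c t \<in> Pgrp" and d: "(c has_vector_derivative v) (at 0)"
      by (rule VelE)
    have tr: "v$1$1 + v$2$2 + v$3$3 = 0" using vel_trace[OF d c0] cH P_SL3 by blast
    have "\<forall>t. c t $ 2 $ 1 = 0 \<and> c t $ 3 $ 1 = 0 \<and> c t $ 3 $ 2 = 0"
    proof
      fix t have "c t \<in> Pgrp" using cH by blast
      then show "c t $ 2 $ 1 = 0 \<and> c t $ 3 $ 1 = 0 \<and> c t $ 3 $ 2 = 0"
        by (auto simp: mk3_P Pgrp_def)
    qed
    then have "v $ 2 $ 1 = 0" "v $ 3 $ 1 = 0" "v $ 3 $ 2 = 0"
      by (simp_all add: vel_zero[OF d] vel_eq[OF d])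
    then have "v = L (v$1$1, v$2$2, v$1$2, v$1$3, v$2$3)"
      using tr by (subst mk3_eta) (simp add: L_def mk3_eq_iff)
    then show "v \<in> range L" by blast
  qed
  have bas: "L ` Basis \<subseteq> Vel Pgrp"
  proof -
    have "mk3 1 0 0 0 0 0 0 0 (-1) \<in> Vel Pgrp"
      by (rule VelI[where c="\<lambda>t. mk3 (exp t) 0 0 0 1 0 0 0 (1 / exp t)"])
        (auto simp: mat1_mk3 mk3_P intro!: mk3_deriv derivative_eq_intros)
    moreover have "mk3 0 0 0 0 1 0 0 0 (-1) \<in> Vel Pgrp"
      by (rule VelI[where c="\<lambda>t. mk3 1 0 0 0 (exp t) 0 0 0 (1 / exp t)"])
        (auto simp: mat1_mk3 mk3_P intro!: mk3_deriv derivative_eq_intros)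
    moreover have "mk3 0 1 0 0 0 0 0 0 0 \<in> Vel Pgrp"
      by (rule VelI[where c="\<lambda>t. mk3 1 t 0 0 1 0 0 0 1"])
        (auto simp: mat1_mk3 mk3_P intro!: mk3_deriv derivative_eq_intros)
    moreover have "mk3 0 0 1 0 0 0 0 0 0 \<in> Vel Pgrp"
      by (rule VelI[where c="\<lambda>t. mk3 1 0 t 0 1 0 0 0 1"])
        (auto simp: mat1_mk3 mk3_P intro!: mk3_deriv derivative_eq_intros)
    moreover have "mk3 0 0 0 0 0 1 0 0 0 \<in> Vel Pgrp"
      by (rule VelI[where c="\<lambda>t. mk3 1 0 0 0 1 t 0 0 1"])
        (auto simp: mat1_mk3 mk3_P intro!: mk3_deriv derivative_eq_intros)
    ultimately show ?thesis by (auto simp: Basis_prod_def L_def)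
  qed
  show ?thesis using lie_dim_param[OF lin inj sub bas] by simp
qed

lemma dim_SL3: "lie_dim SL3 = 8"
proof -
  define L :: "real \<times> real \<times> real \<times> real \<times> real \<times> real \<times> real \<times> real \<Rightarrow> mat3" where
    "L = (\<lambda>x. mk3 (fst x) (fst (snd (snd x))) (fst (snd (snd (snd x)))) (fst (snd (snd (snd (snd x))))) (fst (snd x)) (fst (snd (snd (snd (snd (snd x)))))) (fst (snd (snd (snd (snd (snd (snd x))))))) (snd (snd (snd (snd (snd (snd (snd x))))))) (- (fst x) - (fst (snd x))))"
  have lin: "linear L" by (rule linearI) (auto simp: L_def mk3_add mk3_scale algebra_simps)
  have inj: "inj L" by (rule injI) (auto simp: L_def mk3_eq_iff prod_eq_iff)
  have sub: "Vel SL3 \<subseteq> range L"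
  proof
    fix v assume "v \<in> Vel SL3"
    then obtain c where c0: "c 0 = mat 1" and cH: "\<forall>t. c t \<in> SL3" and d: "(c has_vector_derivative v) (at 0)"
      by (rule VelE)
    have tr: "v$1$1 + v$2$2 + v$3$3 = 0" using vel_trace[OF d c0] cH by blast
    have "v = L (v$1$1, v$2$2, v$1$2, v$1$3, v$2$1, v$2$3, v$3$1, v$3$2)"
      using tr by (subst mk3_eta) (simp add: L_def mk3_eq_iff)
    then show "v \<in> range L" by blast
  qed
  have bas: "L ` Basis \<subseteq> Vel SL3"
  proof -
    have "mk3 1 0 0 0 0 0 0 0 (-1) \<in> Vel SL3"
      by (rule VelI[where c="\<lambda>t. mk3 (exp t) 0 0 0 1 0 0 0 (1 / exp t)"])
        (auto simp: mat1_mk3 SL3_def det_mk3 intro!: mk3_deriv derivative_eq_intros)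
    moreover have "mk3 0 0 0 0 1 0 0 0 (-1) \<in> Vel SL3"
      by (rule VelI[where c="\<lambda>t. mk3 1 0 0 0 (exp t) 0 0 0 (1 / exp t)"])
        (auto simp: mat1_mk3 SL3_def det_mk3 intro!: mk3_deriv derivative_eq_intros)
    moreover have "mk3 0 1 0 0 0 0 0 0 0 \<in> Vel SL3"
      by (rule VelI[where c="\<lambda>t. mk3 1 t 0 0 1 0 0 0 1"])
        (auto simp: mat1_mk3 SL3_def det_mk3 intro!: mk3_deriv derivative_eq_intros)
    moreover have "mk3 0 0 1 0 0 0 0 0 0 \<in> Vel SL3"
      by (rule VelI[where c="\<lambda>t. mk3 1 0 t 0 1 0 0 0 1"])
        (auto simp: mat1_mk3 SL3_def det_mk3 intro!: mk3_deriv derivative_eq_intros)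
    moreover have "mk3 0 0 0 1 0 0 0 0 0 \<in> Vel SL3"
      by (rule VelI[where c="\<lambda>t. mk3 1 0 0 t 1 0 0 0 1"])
        (auto simp: mat1_mk3 SL3_def det_mk3 intro!: mk3_deriv derivative_eq_intros)
    moreover have "mk3 0 0 0 0 0 1 0 0 0 \<in> Vel SL3"
      by (rule VelI[where c="\<lambda>t. mk3 1 0 0 0 1 t 0 0 1"])
        (auto simp: mat1_mk3 SL3_def det_mk3 intro!: mk3_deriv derivative_eq_intros)
    moreover have "mk3 0 0 0 0 0 0 1 0 0 \<in> Vel SL3"
      by (rule VelI[where c="\<lambda>t. mk3 1 0 0 0 1 0 t 0 1"])
        (auto simp: mat1_mk3 SL3_def det_mk3 intro!: mk3_deriv derivative_eq_intros)
    moreover have "mk3 0 0 0 0 0 0 0 1 0 \<in> Vel SL3"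
      by (rule VelI[where c="\<lambda>t. mk3 1 0 0 0 1 0 0 t 1"])
        (auto simp: mat1_mk3 SL3_def det_mk3 intro!: mk3_deriv derivative_eq_intros)
    ultimately show ?thesis by (auto simp: Basis_prod_def L_def)
  qed
  show ?thesis using lie_dim_param[OF lin inj sub bas] by simp
qed

definition Ha1 :: "mat3 set" where "Ha1 = {mk3 a 0 y 0 a z 0 0 (1 / a^2) | a y z. a \<noteq> 0}"

lemma Ha1_SL3: "Ha1 \<subseteq> SL3" by (auto simp: Ha1_def SL3_def det_mk3 field_simps power2_eq_square)

lemma dim_Ha1: "lie_dim Ha1 = 3"
proof -
  define L :: "real \<times> real \<times> real \<Rightarrow> mat3" where
    "L = (\<lambda>x. mk3 (fst x) 0 (fst (snd x)) 0 (fst x) (snd (snd x)) 0 0 (-2 * fst x))"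
  have lin: "linear L" by (rule linearI) (auto simp: L_def mk3_add mk3_scale algebra_simps)
  have inj: "inj L" by (rule injI) (auto simp: L_def mk3_eq_iff prod_eq_iff)
  have sub: "Vel Ha1 \<subseteq> range L"
  proof
    fix v assume "v \<in> Vel Ha1"
    then obtain c where c0: "c 0 = mat 1" and cH: "\<forall>t. c t \<in> Ha1" and d: "(c has_vector_derivative v) (at 0)"
      by (rule VelE)
    have tr: "v$1$1 + v$2$2 + v$3$3 = 0" using vel_trace[OF d c0] cH Ha1_SL3 by blast
    have "\<forall>t. c t $1$2 = 0 \<and> c t $2$1 = 0 \<and> c t $3$1 = 0 \<and> c t $3$2 = 0 \<and> c t $1$1 = c t $2$2"
    proof
      fix t have "c t \<in> Ha1" using cH by blast
      then show "c t $1$2 = 0 \<and> c t $2$1 = 0 \<and> c t $3$1 = 0 \<and> c t $3$2 = 0 \<and> c t $1$1 = c t $2$2"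
        by (auto simp: Ha1_def)
    qed
    then have "v$1$2 = 0" "v$2$1 = 0" "v$3$1 = 0" "v$3$2 = 0" "v$1$1 = v$2$2"
      by (simp_all add: vel_zero[OF d] vel_eq[OF d])
    then have "v = L (v$1$1, v$1$3, v$2$3)"
      using tr by (subst mk3_eta) (simp add: L_def mk3_eq_iff)
    then show "v \<in> range L" by blast
  qed
  have bas: "L ` Basis \<subseteq> Vel Ha1"
  proof -
    have "mk3 1 0 0 0 1 0 0 0 (-2) \<in> Vel Ha1"
      by (rule VelI[where c="\<lambda>t. mk3 (exp t) 0 0 0 (exp t) 0 0 0 (1 / (exp t)^2)"])
        (auto simp: mat1_mk3 Ha1_def mk3_eq_iff intro!: mk3_deriv derivative_eq_intros)
    moreover have "mk3 0 0 1 0 0 0 0 0 0 \<in> Vel Ha1"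
      by (rule VelI[where c="\<lambda>t. mk3 1 0 t 0 1 0 0 0 (1 / 1^2)"])
        (auto simp: mat1_mk3 Ha1_def mk3_eq_iff intro!: mk3_deriv derivative_eq_intros)
    moreover have "mk3 0 0 0 0 0 1 0 0 0 \<in> Vel Ha1"
      by (rule VelI[where c="\<lambda>t. mk3 1 0 0 0 1 t 0 0 (1 / 1^2)"])
        (auto simp: mat1_mk3 Ha1_def mk3_eq_iff intro!: mk3_deriv derivative_eq_intros)
    ultimately show ?thesis by (auto simp: Basis_prod_def L_def)
  qed
  show ?thesis using lie_dim_param[OF lin inj sub bas] by simp
qed



lemma stab_iff:
  assumes "v ** vi = mat 1" "vi ** v = mat 1" "w ** wi = mat 1" "wi ** w = mat 1"
  shows "g \<in> stab (pt v w) \<longleftrightarrow> g \<in> Pgrp \<and> v ** g ** vi \<in> Pgrp \<and> w ** g ** wi \<in> Pgrp"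
  using conj_cond[OF assms(1,2), of "v ** g"] conj_cond[OF assms(3,4), of "w ** g"]
  by (auto simp: stab_pt P_SL3)

lemma conjP:
  assumes "g \<in> Pgrp" "v ** vi = mat 1"
  shows "v ** g ** vi \<in> Pgrp \<longleftrightarrow> (v ** g ** vi)$2$1 = 0 \<and> (v ** g ** vi)$3$1 = 0 \<and> (v ** g ** vi)$3$2 = 0"
proof -
  have "det v * det vi = 1" using assms(2) by (metis det_I det_mul)
  then have "det (v ** g ** vi) = 1" using assms(1) by (simp add: det_mul Pgrp_def SL3_def mult.commute)
  then show ?thesis by (simp add: Pgrp_def SL3_def)
qed

lemma orbit_sub_cell:
  assumes "u \<in> dcoset w"
  shows "orbit (pt v u) \<subseteq> cell v w"
proof
  fix x assume "x \<in> orbit (pt v u)"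
  then obtain g where g: "g \<in> SL3" "x = act (pt v u) g" by (auto simp: orbit_def)
  have "v \<in> dcoset v" unfolding dcoset_def using P_one by force
  then show "x \<in> cell v w" using g assms unfolding cell_def pt_def by blast
qed

lemma cell_sub:
  assumes vi: "v ** vi = mat 1" "vi ** v = mat 1"
    and H: "\<And>r. r \<in> Pgrp \<Longrightarrow> \<exists>u\<in>U. \<exists>k\<in>Pgrp. v ** k ** vi \<in> Pgrp \<and> (\<exists>p\<in>Pgrp. w ** r = p ** u ** k)"
  shows "cell v w \<subseteq> (\<Union>u\<in>U. orbit (pt v u))"
proof
  fix e assume "e \<in> cell v w"
  then obtain g x y where g: "g \<in> SL3" and x: "x \<in> dcoset v" and y: "y \<in> dcoset w"
    and e: "e = act (Pcoset (mat 1), Pcoset x, Pcoset y) g" unfolding cell_def by blast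
  obtain p1 q1 where pq1: "p1 \<in> Pgrp" "q1 \<in> Pgrp" "x = p1 ** v ** q1" using x unfolding dcoset_def by blast
  obtain p2 q2 where pq2: "p2 \<in> Pgrp" "q2 \<in> Pgrp" "y = p2 ** w ** q2" using y unfolding dcoset_def by blast
  obtain qi where qi: "qi \<in> Pgrp" "qi ** q1 = mat 1" using P_inv[OF pq1(2)] by blast
  define h where "h = q1 ** g"
  define r where "r = q2 ** qi"
  have r: "r \<in> Pgrp" using pq2(2) qi(1) P_mult r_def by blast
  obtain u k p where u: "u \<in> U" and k: "k \<in> Pgrp" "v ** k ** vi \<in> Pgrp" and p: "p \<in> Pgrp" "w ** r = p ** u ** k"
    using H[OF r] by blast
  have hS: "k ** h \<in> SL3" using g pq1(2) k(1) P_SL3 SL3_mult h_def by blast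
  have e1: "Pcoset g = Pcoset (k ** h)"
  proof -
    have "k ** h = (k ** q1) ** g" by (simp add: h_def matrix_mul_assoc)
    then show ?thesis using Pcoset_eq P_mult[OF k(1) pq1(2)] by metis
  qed
  have e2: "Pcoset (x ** g) = Pcoset (v ** (k ** h))"
  proof -
    have a: "x ** g = p1 ** (v ** h)" by (simp add: pq1(3) h_def matrix_mul_assoc)
    have b: "v ** (k ** h) = (v ** k ** vi) ** (v ** h)"
    proof -
      have 1: "(v ** k ** vi) ** (v ** h) = (v ** k) ** (vi ** (v ** h))" by (simp add: matrix_mul_assoc)
      have 2: "vi ** (v ** h) = h" using vi(2) by (simp add: matrix_mul_assoc)
      show ?thesis unfolding 1 2 by (simp add: matrix_mul_assoc)
    qed
    have "Pcoset (x ** g) = Pcoset (v ** h)" using a pq1(1) Pcoset_eq by metis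
    moreover have "Pcoset (v ** (k ** h)) = Pcoset (v ** h)" using b k(2) Pcoset_eq by metis
    ultimately show ?thesis by simp
  qed
  have e3: "Pcoset (y ** g) = Pcoset (u ** (k ** h))"
  proof -
    have "y ** g = p2 ** w ** q2 ** (qi ** q1) ** g" using qi(2) pq2(3) by simp
    also have "\<dots> = p2 ** (w ** r) ** h" by (simp add: r_def h_def matrix_mul_assoc)
    also have "\<dots> = (p2 ** p) ** (u ** (k ** h))" by (simp add: p(2) matrix_mul_assoc)
    finally show ?thesis using P_mult[OF pq2(1) p(1)] Pcoset_eq by metis
  qed
  have "e = act (pt v u) (k ** h)"
    unfolding e pt_def act_pt using e1 e2 e3 by simp
  then show "e \<in> (\<Union>u\<in>U. orbit (pt v u))" using u hS unfolding orbit_def by blast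
qed

lemma orbit_disj:
  assumes H: "\<And>k p1 p2. k \<in> Pgrp \<Longrightarrow> p1 \<in> Pgrp \<Longrightarrow> p2 \<in> Pgrp \<Longrightarrow> v ** k = p1 ** v \<Longrightarrow> u1 ** k = p2 ** u2 \<Longrightarrow> False"
  shows "orbit (pt v u1) \<inter> orbit (pt v u2) = {}"
proof (rule ccontr)
  assume "orbit (pt v u1) \<inter> orbit (pt v u2) \<noteq> {}"
  then obtain g h where g: "g \<in> SL3" and h: "h \<in> SL3" and eq: "act (pt v u1) g = act (pt v u2) h"
    unfolding orbit_def by blast
  from eq have "Pcoset g = Pcoset h" "Pcoset (v ** g) = Pcoset (v ** h)" "Pcoset (u1 ** g) = Pcoset (u2 ** h)"
    unfolding pt_def act_pt by auto
  then obtain p0 p1 p2 where p: "p0 \<in> Pgrp" "p1 \<in> Pgrp" "p2 \<in> Pgrp" and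
    e: "g = p0 ** h" "v ** g = p1 ** (v ** h)" "u1 ** g = p2 ** (u2 ** h)" unfolding Pcoset_eq by blast
  have "invertible h" using h by (simp add: SL3_def invertible_det_nz)
  then obtain hinv where hi: "h ** hinv = mat 1" using invertible_right_inverse by blast
  have "v ** p0 = p1 ** v"
  proof -
    have "v ** p0 = v ** g ** hinv" using e(1) hi by (simp add: matrix_mul_assoc[symmetric])
    also have "\<dots> = p1 ** v" using e(2) hi by (simp add: matrix_mul_assoc[symmetric])
    finally show ?thesis .
  qed
  moreover have "u1 ** p0 = p2 ** u2"
  proof -
    have "u1 ** p0 = u1 ** g ** hinv" using e(1) hi by (simp add: matrix_mul_assoc[symmetric])
    also have "\<dots> = p2 ** u2" using e(3) hi by (simp add: matrix_mul_assoc[symmetric])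
    finally show ?thesis .
  qed
  ultimately show False using H p by blast
qed



lemma stab_char:
  assumes "v ** vi = mat 1" "vi ** v = mat 1" "w ** wi = mat 1" "wi ** w = mat 1"
  shows "g \<in> stab (pt v w) \<longleftrightarrow> (\<exists>a x y b z c. g = mk3 a x y 0 b z 0 0 c \<and> a*b*c = 1 \<and>
     (v ** mk3 a x y 0 b z 0 0 c ** vi)$2$1 = 0 \<and> (v ** mk3 a x y 0 b z 0 0 c ** vi)$3$1 = 0 \<and> (v ** mk3 a x y 0 b z 0 0 c ** vi)$3$2 = 0 \<and>
     (w ** mk3 a x y 0 b z 0 0 c ** wi)$2$1 = 0 \<and> (w ** mk3 a x y 0 b z 0 0 c ** wi)$3$1 = 0 \<and> (w ** mk3 a x y 0 b z 0 0 c ** wi)$3$2 = 0)"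
proof
  assume "g \<in> stab (pt v w)"
  then have g: "g \<in> Pgrp" "v ** g ** vi \<in> Pgrp" "w ** g ** wi \<in> Pgrp" using stab_iff[OF assms] by auto
  then show "\<exists>a x y b z c. g = mk3 a x y 0 b z 0 0 c \<and> a*b*c = 1 \<and>
     (v ** mk3 a x y 0 b z 0 0 c ** vi)$2$1 = 0 \<and> (v ** mk3 a x y 0 b z 0 0 c ** vi)$3$1 = 0 \<and> (v ** mk3 a x y 0 b z 0 0 c ** vi)$3$2 = 0 \<and>
     (w ** mk3 a x y 0 b z 0 0 c ** wi)$2$1 = 0 \<and> (w ** mk3 a x y 0 b z 0 0 c ** wi)$3$1 = 0 \<and> (w ** mk3 a x y 0 b z 0 0 c ** wi)$3$2 = 0"
  proof -
    obtain a x y b z c where e: "g = mk3 a x y 0 b z 0 0 c" "a*b*c = 1" using g(1) P_form by auto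
    have r: "(v ** g ** vi)$2$1 = 0" "(v ** g ** vi)$3$1 = 0" "(v ** g ** vi)$3$2 = 0"
     "(w ** g ** wi)$2$1 = 0" "(w ** g ** wi)$3$1 = 0" "(w ** g ** wi)$3$2 = 0"
      using conjP[OF g(1) assms(1)] conjP[OF g(1) assms(3)] g by auto
    show ?thesis using e(2) r unfolding e(1) by blast
  qed
next
  assume "\<exists>a x y b z c. g = mk3 a x y 0 b z 0 0 c \<and> a*b*c = 1 \<and>
     (v ** mk3 a x y 0 b z 0 0 c ** vi)$2$1 = 0 \<and> (v ** mk3 a x y 0 b z 0 0 c ** vi)$3$1 = 0 \<and> (v ** mk3 a x y 0 b z 0 0 c ** vi)$3$2 = 0 \<and>
     (w ** mk3 a x y 0 b z 0 0 c ** wi)$2$1 = 0 \<and> (w ** mk3 a x y 0 b z 0 0 c ** wi)$3$1 = 0 \<and> (w ** mk3 a x y 0 b z 0 0 c ** wi)$3$2 = 0"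
  then obtain a x y b z c where e: "g = mk3 a x y 0 b z 0 0 c" "a*b*c = 1" and
     r: "(v ** g ** vi)$2$1 = 0" "(v ** g ** vi)$3$1 = 0" "(v ** g ** vi)$3$2 = 0"
     "(w ** g ** wi)$2$1 = 0" "(w ** g ** wi)$3$1 = 0" "(w ** g ** wi)$3$2 = 0" by blast
  have gP: "g \<in> Pgrp" using e by (simp add: mk3_P)
  show "g \<in> stab (pt v w)" using stab_iff[OF assms] conjP[OF gP assms(1)] conjP[OF gP assms(3)] gP r by blast
qed

lemma abc_iff: "(a::real) * b * c = 1 \<longleftrightarrow> a \<noteq> 0 \<and> b \<noteq> 0 \<and> c = 1 / (a * b)"
proof
  assume h: "a * b * c = 1"
  then have "a * b \<noteq> 0" by auto
  moreover have "c = 1 / (a * b)" using h \<open>a * b \<noteq> 0\<close> by (simp add: eq_divide_eq mult.commute)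
  ultimately show "a \<noteq> 0 \<and> b \<noteq> 0 \<and> c = 1 / (a * b)" by simp
qed auto

lemma s1s1: "s1 ** s1 = mat 1" by (simp add: s1_def mk3_mult mat1_mk3)
lemma s2s2: "s2 ** s2 = mat 1" by (simp add: s2_def mk3_mult mat1_mk3)
lemma id_inv: "mat 1 ** mat 1 = (mat 1 :: mat3)" by simp
lemma w1_inv: "(s1 ** nmat 1 0 0) ** (nmat (-1) 0 0 ** s1) = mat 1" "(nmat (-1) 0 0 ** s1) ** (s1 ** nmat 1 0 0) = mat 1"
  by (simp_all add: s1_def nmat_def mk3_mult mat1_mk3)
lemma w0_inv: "(s1 ** nmat 0 0 0) ** (nmat 0 0 0 ** s1) = mat 1" "(nmat 0 0 0 ** s1) ** (s1 ** nmat 0 0 0) = mat 1"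
  by (simp_all add: s1_def nmat_def mk3_mult mat1_mk3)
lemma w2_inv: "(s2 ** nmat 0 0 1) ** (nmat 0 0 (-1) ** s2) = mat 1" "(nmat 0 0 (-1) ** s2) ** (s2 ** nmat 0 0 1) = mat 1"
  by (simp_all add: s2_def nmat_def mk3_mult mat1_mk3)
lemma w3_inv: "(s2 ** nmat 0 0 0) ** (nmat 0 0 0 ** s2) = mat 1" "(nmat 0 0 0 ** s2) ** (s2 ** nmat 0 0 0) = mat 1"
  by (simp_all add: s2_def nmat_def mk3_mult mat1_mk3)

lemma stab_a1: "stab (pt s1 (s1 ** nmat 1 0 0)) = Ha1"
proof (rule set_eqI)
  fix g
  show "g \<in> stab (pt s1 (s1 ** nmat 1 0 0)) \<longleftrightarrow> g \<in> Ha1"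
    unfolding stab_char[OF s1s1 s1s1 w1_inv] Ha1_def
    apply (simp add: s1_def s2_def nmat_def mk3_mult mat1_mk3)
    apply (auto simp: mk3_eq_iff abc_iff power2_eq_square)
    done
qed

lemma stab_a2: "stab (pt s1 (s1 ** nmat 0 0 0)) = Ha2"
proof (rule set_eqI)
  fix g
  show "g \<in> stab (pt s1 (s1 ** nmat 0 0 0)) \<longleftrightarrow> g \<in> Ha2"
    unfolding stab_char[OF s1s1 s1s1 w0_inv] Ha2_def
    apply (simp add: s1_def s2_def nmat_def mk3_mult mat1_mk3)
    apply (auto simp: mk3_eq_iff abc_iff power2_eq_square)
    done
qed

lemma stab_b: "stab (pt s1 s2) = Hb"
proof (rule set_eqI)
  fix g
  show "g \<in> stab (pt s1 s2) \<longleftrightarrow> g \<in> Hb"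
    unfolding stab_char[OF s1s1 s1s1 s2s2 s2s2] Hb_def
    apply (simp add: s1_def s2_def nmat_def mk3_mult mat1_mk3)
    apply (auto simp: mk3_eq_iff abc_iff power2_eq_square)
    done
qed

lemma stab_c: "stab (pt s1 (mat 1)) = Ha2"
proof (rule set_eqI)
  fix g
  show "g \<in> stab (pt s1 (mat 1)) \<longleftrightarrow> g \<in> Ha2"
    unfolding stab_char[OF s1s1 s1s1 id_inv id_inv] Ha2_def
    apply (simp add: s1_def s2_def nmat_def mk3_mult mat1_mk3)
    apply (auto simp: mk3_eq_iff abc_iff power2_eq_square)
    done
qed

lemma stab_d1: "stab (pt s2 (s2 ** nmat 0 0 1)) = Hd1"
proof (rule set_eqI)
  fix g
  show "g \<in> stab (pt s2 (s2 ** nmat 0 0 1)) \<longleftrightarrow> g \<in> Hd1"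
    unfolding stab_char[OF s2s2 s2s2 w2_inv] Hd1_def
    apply (simp add: s1_def s2_def nmat_def mk3_mult mat1_mk3)
    apply (auto simp: mk3_eq_iff abc_iff power2_eq_square)
    apply (simp add: field_simps)
    done
qed

lemma stab_d2: "stab (pt s2 (s2 ** nmat 0 0 0)) = Hd2"
proof (rule set_eqI)
  fix g
  show "g \<in> stab (pt s2 (s2 ** nmat 0 0 0)) \<longleftrightarrow> g \<in> Hd2"
    unfolding stab_char[OF s2s2 s2s2 w3_inv] Hd2_def
    apply (simp add: s1_def s2_def nmat_def mk3_mult mat1_mk3)
    apply (auto simp: mk3_eq_iff abc_iff power2_eq_square)
    done
qed

lemma stab_e: "stab (pt s2 (mat 1)) = Hd2"
proof (rule set_eqI)
  fix g
  show "g \<in> stab (pt s2 (mat 1)) \<longleftrightarrow> g \<in> Hd2"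
    unfolding stab_char[OF s2s2 s2s2 id_inv id_inv] Hd2_def
    apply (simp add: s1_def s2_def nmat_def mk3_mult mat1_mk3)
    apply (auto simp: mk3_eq_iff abc_iff power2_eq_square)
    done
qed

lemma stab_f: "stab (pt (mat 1) (mat 1)) = Pgrp"
  using stab_iff[OF id_inv id_inv id_inv id_inv] by auto


lemma nmat_P: "nmat x y z \<in> Pgrp" by (simp add: nmat_def mk3_P)

lemma dcoset_self: "v \<in> dcoset v"
  unfolding dcoset_def using P_one by force

lemma dcoset_n: "v ** nmat x y z \<in> dcoset v"
  unfolding dcoset_def using P_one nmat_P by force

lemma disj_a: "orbit (pt s1 (s1 ** nmat 1 0 0)) \<inter> orbit (pt s1 (s1 ** nmat 0 0 0)) = {}"
  by (rule orbit_disj) (auto simp: P_form s1_def nmat_def mk3_mult mk3_eq_iff)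

lemma disj_d: "orbit (pt s2 (s2 ** nmat 0 0 1)) \<inter> orbit (pt s2 (s2 ** nmat 0 0 0)) = {}"
  by (rule orbit_disj) (auto simp: P_form s2_def nmat_def mk3_mult mk3_eq_iff)

lemma P_param: "r \<in> Pgrp \<Longrightarrow> \<exists>a x y b z. r = mk3 a x y 0 b z 0 0 (1/(a*b)) \<and> a \<noteq> 0 \<and> b \<noteq> 0"
  by (auto simp: P_form abc_iff)

lemma cell_a: "cell s1 s1 = orbit (pt s1 (s1 ** nmat 1 0 0)) \<union> orbit (pt s1 (s1 ** nmat 0 0 0))"
proof (rule antisym)
  have "cell s1 s1 \<subseteq> (\<Union>u\<in>{s1 ** nmat 1 0 0, s1 ** nmat 0 0 0}. orbit (pt s1 u))"
  proof (rule cell_sub[OF s1s1 s1s1])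
    fix r assume "r \<in> Pgrp"
    then obtain a x y b z where r: "r = mk3 a x y 0 b z 0 0 (1/(a*b))" "a \<noteq> 0" "b \<noteq> 0"
      using P_param by blast
    show "\<exists>u\<in>{s1 ** nmat 1 0 0, s1 ** nmat 0 0 0}. \<exists>k\<in>Pgrp. s1 ** k ** s1 \<in> Pgrp \<and> (\<exists>p\<in>Pgrp. s1 ** r = p ** u ** k)"
    proof (cases "x = 0")
      case True
      have 1: "r \<in> Pgrp" "s1 ** r ** s1 \<in> Pgrp" using r True by (simp_all add: s1_def mk3_mult mk3_P)
      have 2: "s1 ** r = mat 1 ** (s1 ** nmat 0 0 0) ** r" by (simp add: s1_def nmat_def mk3_mult mat1_mk3)
      show ?thesis using 1 2 P_one by blast
    next
      case False
      define k where "k = mk3 a 0 y 0 x 0 0 0 (1/(a*x))"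
      define p where "p = mk3 (b/x) 0 (-z*a*x) 0 1 0 0 0 (a*x/(a*b))"
      have 1: "k \<in> Pgrp" "s1 ** k ** s1 \<in> Pgrp" "p \<in> Pgrp" using r False
        by (simp_all add: k_def p_def s1_def mk3_mult mk3_P)
      have 2: "s1 ** r = p ** (s1 ** nmat 1 0 0) ** k" using r False
        by (simp add: k_def p_def s1_def nmat_def mk3_mult mk3_eq_iff)
      show ?thesis using 1 2 by blast
    qed
  qed
  then show "cell s1 s1 \<subseteq> orbit (pt s1 (s1 ** nmat 1 0 0)) \<union> orbit (pt s1 (s1 ** nmat 0 0 0))" by simp
  show "orbit (pt s1 (s1 ** nmat 1 0 0)) \<union> orbit (pt s1 (s1 ** nmat 0 0 0)) \<subseteq> cell s1 s1"
    using orbit_sub_cell[OF dcoset_n] by blast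
qed


lemma cell_d: "cell s2 s2 = orbit (pt s2 (s2 ** nmat 0 0 1)) \<union> orbit (pt s2 (s2 ** nmat 0 0 0))"
proof (rule antisym)
  have "cell s2 s2 \<subseteq> (\<Union>u\<in>{s2 ** nmat 0 0 1, s2 ** nmat 0 0 0}. orbit (pt s2 u))"
  proof (rule cell_sub[OF s2s2 s2s2])
    fix r assume "r \<in> Pgrp"
    then obtain a x y b z where r: "r = mk3 a x y 0 b z 0 0 (1/(a*b))" "a \<noteq> 0" "b \<noteq> 0"
      using P_param by blast
    show "\<exists>u\<in>{s2 ** nmat 0 0 1, s2 ** nmat 0 0 0}. \<exists>k\<in>Pgrp. s2 ** k ** s2 \<in> Pgrp \<and> (\<exists>p\<in>Pgrp. s2 ** r = p ** u ** k)"
    proof (cases "z = 0")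
      case True
      have 1: "r \<in> Pgrp" "s2 ** r ** s2 \<in> Pgrp" using r True by (simp_all add: s2_def mk3_mult mk3_P)
      have 2: "s2 ** r = mat 1 ** (s2 ** nmat 0 0 0) ** r" by (simp add: s2_def nmat_def mk3_mult mat1_mk3)
      show ?thesis using 1 2 P_one by blast
    next
      case False
      define k where "k = mk3 (1/(b*z)) (x/(a*b*z)) (y/(a*b*z)) 0 b 0 0 0 z"
      define p where "p = mk3 (a*b*z) 0 0 0 (1/(a*b*z)) 0 0 0 1"
      have 1: "k \<in> Pgrp" "s2 ** k ** s2 \<in> Pgrp" "p \<in> Pgrp" using r False
        by (simp_all add: k_def p_def s2_def mk3_mult mk3_P)
      have 2: "s2 ** r = p ** (s2 ** nmat 0 0 1) ** k" using r False
        by (simp add: k_def p_def s2_def nmat_def mk3_mult mk3_eq_iff)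
      show ?thesis using 1 2 by blast
    qed
  qed
  then show "cell s2 s2 \<subseteq> orbit (pt s2 (s2 ** nmat 0 0 1)) \<union> orbit (pt s2 (s2 ** nmat 0 0 0))" by simp
  show "orbit (pt s2 (s2 ** nmat 0 0 1)) \<union> orbit (pt s2 (s2 ** nmat 0 0 0)) \<subseteq> cell s2 s2"
    using orbit_sub_cell[OF dcoset_n] by blast
qed

lemma cell_b: "cell s1 s2 = orbit (pt s1 s2)"
proof (rule antisym)
  have "cell s1 s2 \<subseteq> (\<Union>u\<in>{s2}. orbit (pt s1 u))"
  proof (rule cell_sub[OF s1s1 s1s1])
    fix r assume "r \<in> Pgrp"
    then obtain a x y b z where r: "r = mk3 a x y 0 b z 0 0 (1/(a*b))" "a \<noteq> 0" "b \<noteq> 0"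
      using P_param by blast
    define k where "k = mk3 a 0 0 0 b z 0 0 (1/(a*b))"
    define p where "p = mk3 1 (-((y - x*z/b)*(a*b))) (-x/b) 0 1 0 0 0 1"
    have 1: "k \<in> Pgrp" "s1 ** k ** s1 \<in> Pgrp" "p \<in> Pgrp" using r
      by (simp_all add: k_def p_def s1_def mk3_mult mk3_P)
    have 2: "s2 ** r = p ** s2 ** k" using r
      by (simp add: k_def p_def s2_def mk3_mult mk3_eq_iff field_simps)
    show "\<exists>u\<in>{s2}. \<exists>k\<in>Pgrp. s1 ** k ** s1 \<in> Pgrp \<and> (\<exists>p\<in>Pgrp. s2 ** r = p ** u ** k)"
      using 1 2 by blast
  qed
  then show "cell s1 s2 \<subseteq> orbit (pt s1 s2)" by simp
  show "orbit (pt s1 s2) \<subseteq> cell s1 s2" using orbit_sub_cell[OF dcoset_self] by blast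
qed

lemma cell_triv:
  assumes "v ** vi = mat 1" "vi ** v = mat 1"
  shows "cell v (mat 1) = orbit (pt v (mat 1))"
proof (rule antisym)
  have "cell v (mat 1) \<subseteq> (\<Union>u\<in>{mat 1}. orbit (pt v u))"
  proof (rule cell_sub[OF assms])
    fix r assume r: "r \<in> Pgrp"
    have "v ** mat 1 ** vi \<in> Pgrp" using assms P_one by simp
    moreover have "mat 1 ** r = r ** mat 1 ** mat 1" by simp
    ultimately show "\<exists>u\<in>{mat 1}. \<exists>k\<in>Pgrp. v ** k ** vi \<in> Pgrp \<and> (\<exists>p\<in>Pgrp. mat 1 ** r = p ** u ** k)"
      using r P_one by blast
  qed
  then show "cell v (mat 1) \<subseteq> orbit (pt v (mat 1))" by simp
  show "orbit (pt v (mat 1)) \<subseteq> cell v (mat 1)" using orbit_sub_cell[OF dcoset_self] by blast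
qed

lemma cell_c: "cell s1 (mat 1) = orbit (pt s1 (mat 1))" by (rule cell_triv[OF s1s1 s1s1])
lemma cell_e: "cell s2 (mat 1) = orbit (pt s2 (mat 1))" by (rule cell_triv[OF s2s2 s2s2])
lemma cell_f: "cell (mat 1) (mat 1) = orbit (pt (mat 1) (mat 1))" by (rule cell_triv[OF id_inv id_inv])



lemma o_a1: "orbit_dim (pt s1 (s1 ** nmat 1 0 0)) = 5" by (simp add: orbit_dim_def stab_a1 dim_Ha1 dim_SL3)
lemma o_a2: "orbit_dim (pt s1 (s1 ** nmat 0 0 0)) = 4" by (simp add: orbit_dim_def stab_a2 dim_Ha2 dim_SL3)
lemma o_b: "orbit_dim (pt s1 s2) = 5" by (simp add: orbit_dim_def stab_b dim_Hb dim_SL3)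
lemma o_c: "orbit_dim (pt s1 (mat 1)) = 4" by (simp add: orbit_dim_def stab_c dim_Ha2 dim_SL3)
lemma o_d1: "orbit_dim (pt s2 (s2 ** nmat 0 0 1)) = 5" by (simp add: orbit_dim_def stab_d1 dim_Hd1 dim_SL3)
lemma o_d2: "orbit_dim (pt s2 (s2 ** nmat 0 0 0)) = 4" by (simp add: orbit_dim_def stab_d2 dim_Hd2 dim_SL3)
lemma o_e: "orbit_dim (pt s2 (mat 1)) = 4" by (simp add: orbit_dim_def stab_e dim_Hd2 dim_SL3)
lemma o_f: "orbit_dim (pt (mat 1) (mat 1)) = 3" by (simp add: orbit_dim_def stab_f dim_Pgrp dim_SL3)
lemmas st_a1 = stab_a1[unfolded Ha1_def]
lemmas st_a2 = stab_a2[unfolded Ha2_def]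
lemmas st_b = stab_b[unfolded Hb_def]
lemmas st_c = stab_c[unfolded Ha2_def]
lemmas st_d1 = stab_d1[unfolded Hd1_def]
lemmas st_d2 = stab_d2[unfolded Hd2_def]
lemmas st_e = stab_e[unfolded Hd2_def]

theorem mainTheorem11:
  shows
   "(cell s1 s1 = orbit (pt s1 (s1 ** nmat 1 0 0)) \<union> orbit (pt s1 (s1 ** nmat 0 0 0)) \<and>
     orbit (pt s1 (s1 ** nmat 1 0 0)) \<inter> orbit (pt s1 (s1 ** nmat 0 0 0)) = {} \<and>
     orbit_dim (pt s1 (s1 ** nmat 1 0 0)) = 5 \<and>
     stab (pt s1 (s1 ** nmat 1 0 0)) =
       {mk3 a 0 y 0 a z 0 0 (1 / a^2) | a y z. a \<noteq> 0} \<and>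
     orbit_dim (pt s1 (s1 ** nmat 0 0 0)) = 4 \<and>
     stab (pt s1 (s1 ** nmat 0 0 0)) =
       {mk3 a 0 y 0 b z 0 0 (1 / (a * b)) | a b y z. a \<noteq> 0 \<and> b \<noteq> 0})
  \<and> (cell s1 s2 = orbit (pt s1 s2) \<and> orbit_dim (pt s1 s2) = 5 \<and>
     stab (pt s1 s2) = {mk3 a 0 y 0 b 0 0 0 (1 / (a * b)) | a b y. a \<noteq> 0 \<and> b \<noteq> 0})
  \<and> (cell s1 (mat 1) = orbit (pt s1 (mat 1)) \<and> orbit_dim (pt s1 (mat 1)) = 4 \<and>
     stab (pt s1 (mat 1)) =
       {mk3 a 0 y 0 b z 0 0 (1 / (a * b)) | a b y z. a \<noteq> 0 \<and> b \<noteq> 0})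
  \<and> (cell s2 s2 = orbit (pt s2 (s2 ** nmat 0 0 1)) \<union> orbit (pt s2 (s2 ** nmat 0 0 0)) \<and>
     orbit (pt s2 (s2 ** nmat 0 0 1)) \<inter> orbit (pt s2 (s2 ** nmat 0 0 0)) = {} \<and>
     orbit_dim (pt s2 (s2 ** nmat 0 0 1)) = 5 \<and>
     stab (pt s2 (s2 ** nmat 0 0 1)) =
       {mk3 (1 / a^2) x y 0 a 0 0 0 a | a x y. a \<noteq> 0} \<and>
     orbit_dim (pt s2 (s2 ** nmat 0 0 0)) = 4 \<and>
     stab (pt s2 (s2 ** nmat 0 0 0)) =
       {mk3 a x y 0 b 0 0 0 (1 / (a * b)) | a b x y. a \<noteq> 0 \<and> b \<noteq> 0})
  \<and> (cell s2 (mat 1) = orbit (pt s2 (mat 1)) \<and> orbit_dim (pt s2 (mat 1)) = 4 \<and>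
     stab (pt s2 (mat 1)) =
       {mk3 a x y 0 b 0 0 0 (1 / (a * b)) | a b x y. a \<noteq> 0 \<and> b \<noteq> 0})
  \<and> (cell (mat 1) (mat 1) = orbit (pt (mat 1) (mat 1)) \<and> orbit_dim (pt (mat 1) (mat 1)) = 3 \<and>
     stab (pt (mat 1) (mat 1)) = Pgrp)"
  apply (insert o_a1 o_a2 o_b o_c o_d1 o_d2 o_e o_f st_a1 st_a2 st_b st_c st_d1 st_d2 st_e stab_f
     cell_a cell_b cell_c cell_d cell_e cell_f disj_a disj_d)
  apply (intro conjI)
  apply assumption+
  done

end
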